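(* Let $r_0,r_1,r_2\ge 1$ with $r_1<r_0$ and $r_1<r_2$, and let $L=\mathfrak{g}(r_0,r_1,r_2)$. Then $b(L)=r_1(r_0+r_2-r_1)$.
   Context: All Lie algebras are over an algebraically closed field $\mathbf{k}$ of characteristic zero. $\mathcal{P}(r_0,r_1,r_2)$ is the poset on $\{b_1,\dots,b_{r_0},m_1,\dots,m_{r_1},t_1,\dots,t_{r_2}\}$ whose strict relations are exactly $b_i\prec m_j$, $m_j\prec t_k$ and $b_i\prec t_k$ for all $i,j,k$. $\mathfrak{g}(r_0,r_1,r_2)$ denotes the nilpotent Lie poset algebra $\mathfrak{g}^{\prec}(\mathcal{P}(r_0,r_1,r_2))$: the Lie algebra under the commutator bracket spanned by matrix units $E_{p,q}$ with $p\prec q$. The breadth of a Lie algebra $L$ is $b(L)=\max_{x\in L}\operatorname{rank}(\mathrm{ad}_x)$, where $\mathrm{ad}_x=[x,-]$. *)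

theory Defs
  imports "HOL-Computational_Algebra.Polynomial" "HOL-Library.Function_Algebras"
begin

text \<open>Elements of P(r0,r1,r2) are encoded as naturals 0..<r0+r1+r2:
  b_i = i-1 (i=1..r0), m_j = r0+j-1, t_k = r0+r1+k-1.\<close>

definition bot_elts :: "nat \<Rightarrow> nat \<Rightarrow> nat \<Rightarrow> nat set" where
  "bot_elts r0 r1 r2 = {0..<r0}"
definition mid_elts :: "nat \<Rightarrow> nat \<Rightarrow> nat \<Rightarrow> nat set" where
  "mid_elts r0 r1 r2 = {r0..<r0+r1}"
definition top_elts :: "nat \<Rightarrow> nat \<Rightarrow> nat \<Rightarrow> nat set" where
  "top_elts r0 r1 r2 = {r0+r1..<r0+r1+r2}"

definition prec :: "nat \<Rightarrow> nat \<Rightarrow> nat \<Rightarrow> nat \<Rightarrow> nat \<Rightarrow> bool" where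
  "prec r0 r1 r2 p q \<longleftrightarrow>
     (p \<in> bot_elts r0 r1 r2 \<and> q \<in> mid_elts r0 r1 r2) \<or>
     (p \<in> mid_elts r0 r1 r2 \<and> q \<in> top_elts r0 r1 r2) \<or>
     (p \<in> bot_elts r0 r1 r2 \<and> q \<in> top_elts r0 r1 r2)"

definition mscale :: "'k::field \<Rightarrow> (nat \<Rightarrow> nat \<Rightarrow> 'k) \<Rightarrow> (nat \<Rightarrow> nat \<Rightarrow> 'k)" where
  "mscale c x = (\<lambda>p q. c * x p q)"

definition matunit :: "nat \<Rightarrow> nat \<Rightarrow> (nat \<Rightarrow> nat \<Rightarrow> 'k::field)" where
  "matunit p q = (\<lambda>i j. if i = p \<and> j = q then 1 else 0)"

definition lie_poset_alg :: "nat \<Rightarrow> nat \<Rightarrow> nat \<Rightarrow> (nat \<Rightarrow> nat \<Rightarrow> 'k::field) set" where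
  "lie_poset_alg r0 r1 r2 =
     module.span mscale {matunit p q | p q. prec r0 r1 r2 p q}"

definition comm_bracket :: "nat \<Rightarrow> (nat \<Rightarrow> nat \<Rightarrow> 'k::field) \<Rightarrow> (nat \<Rightarrow> nat \<Rightarrow> 'k) \<Rightarrow> (nat \<Rightarrow> nat \<Rightarrow> 'k)" where
  "comm_bracket n x y = (\<lambda>p q. (\<Sum>r<n. x p r * y r q) - (\<Sum>r<n. y p r * x r q))"

definition ad_rank :: "nat \<Rightarrow> (nat \<Rightarrow> nat \<Rightarrow> 'k::field) set \<Rightarrow> (nat \<Rightarrow> nat \<Rightarrow> 'k) \<Rightarrow> nat" where
  "ad_rank n L x = vector_space.dim mscale (comm_bracket n x ` L)"

definition breadth :: "nat \<Rightarrow> (nat \<Rightarrow> nat \<Rightarrow> 'k::field) set \<Rightarrow> nat" where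
  "breadth n L = Max (ad_rank n L ` L)"

end

theory Submission
  imports Defs
begin

lemma mscale_vs: "vector_space (mscale :: 'k::field \<Rightarrow> _)"
  unfolding vector_space_def module_def mscale_def
  by (auto simp: fun_eq_iff algebra_simps)

interpretation V: vector_space "mscale :: 'k::field \<Rightarrow> (nat \<Rightarrow> nat \<Rightarrow> 'k) \<Rightarrow> _"
  by (rule mscale_vs)

lemma sum_app: "(sum g A :: nat \<Rightarrow> nat \<Rightarrow> 'k::field) p q = (\<Sum>a\<in>A. g a p q)"
  by (induct A rule: infinite_finite_induct) auto

lemma mscale_app[simp]: "mscale c x p q = c * x p q"
  by (simp add: mscale_def)

lemma matunit_app: "matunit a b p q = (if p = a \<and> q = b then 1 else 0)"
  by (simp add: matunit_def)

definition Pset :: "nat \<Rightarrow> nat \<Rightarrow> nat \<Rightarrow> (nat \<times> nat) set" where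
  "Pset r0 r1 r2 = {(p,q). prec r0 r1 r2 p q}"

lemma prec_bound: "prec r0 r1 r2 p q \<Longrightarrow> p < r0 + r1 + r2 \<and> q < r0 + r1 + r2"
  by (auto simp: prec_def bot_elts_def mid_elts_def top_elts_def)

lemma finite_Pset: "finite (Pset r0 r1 r2)"
proof -
  have "Pset r0 r1 r2 \<subseteq> {..<r0+r1+r2} \<times> {..<r0+r1+r2}"
    using prec_bound by (auto simp: Pset_def)
  then show ?thesis by (rule finite_subset) auto
qed

lemma L_char: "(x :: nat \<Rightarrow> nat \<Rightarrow> 'k::field) \<in> lie_poset_alg r0 r1 r2 \<longleftrightarrow>
   (\<forall>p q. \<not> prec r0 r1 r2 p q \<longrightarrow> x p q = 0)"
proof
  assume "x \<in> lie_poset_alg r0 r1 r2"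
  moreover have "V.span {matunit p q | p q. prec r0 r1 r2 p q}
     \<subseteq> {x :: nat \<Rightarrow> nat \<Rightarrow> 'k. \<forall>p q. \<not> prec r0 r1 r2 p q \<longrightarrow> x p q = 0}"
    by (rule V.span_minimal) (auto simp: V.subspace_def matunit_app)
  ultimately show "\<forall>p q. \<not> prec r0 r1 r2 p q \<longrightarrow> x p q = 0"
    unfolding lie_poset_alg_def by blast
next
  assume H: "\<forall>p q. \<not> prec r0 r1 r2 p q \<longrightarrow> x p q = 0"
  have "x = (\<Sum>pq\<in>Pset r0 r1 r2. mscale (x (fst pq) (snd pq)) (matunit (fst pq) (snd pq)))"
  proof (intro ext)
    fix p q
    show "x p q = (\<Sum>pq\<in>Pset r0 r1 r2. mscale (x (fst pq) (snd pq)) (matunit (fst pq) (snd pq))) p q"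
    proof -
      have "(\<Sum>pq\<in>Pset r0 r1 r2. mscale (x (fst pq) (snd pq)) (matunit (fst pq) (snd pq))) p q
          = (\<Sum>a\<in>Pset r0 r1 r2. if a = (p,q) then x p q else 0)"
        unfolding sum_app by (rule sum.cong) (auto simp: matunit_app)
      also have "\<dots> = x p q" using H finite_Pset[of r0 r1 r2] by (auto simp: Pset_def)
      finally show ?thesis by simp
    qed
  qed
  also have "\<dots> \<in> lie_poset_alg r0 r1 r2"
    unfolding lie_poset_alg_def
    by (intro V.span_sum V.span_scale V.span_base) (auto simp: Pset_def; blast)
  finally show "x \<in> lie_poset_alg r0 r1 r2" .
qed

lemma rows_span:
  fixes f :: "nat \<Rightarrow> nat \<Rightarrow> 'k::field"
  assumes I: "finite I" and J: "finite J"
  shows "\<exists>R \<subseteq> I. card R \<le> card J \<and> (\<forall>s\<in>I. \<exists>w. \<forall>j\<in>J. f s j = (\<Sum>r\<in>R. w r * f r j))"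
proof -
  define row where "row s = (\<lambda>(p::nat) (q::nat). if p = 0 \<and> q \<in> J then f s q else (0::'k))" for s
  obtain B where B: "B \<subseteq> row ` I" "V.independent B" "row ` I \<subseteq> V.span B"
    using V.basis_exists by metis
  have rowsp: "row s = (\<Sum>j\<in>J. mscale (f s j) (matunit 0 j))" for s
  proof (intro ext)
    fix p q
    have "(\<Sum>j\<in>J. mscale (f s j) (matunit 0 j)) p q = (\<Sum>j\<in>J. if j = q then (if p = 0 then f s q else 0) else 0)"
      unfolding sum_app by (rule sum.cong) (auto simp: matunit_app)
    also have "\<dots> = row s p q" using J by (simp add: row_def)
    finally show "row s p q = (\<Sum>j\<in>J. mscale (f s j) (matunit 0 j)) p q" by simp
  qed
  have "row s \<in> V.span (matunit 0 ` J)" for s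
    unfolding rowsp by (intro V.span_sum V.span_scale V.span_base) auto
  then have "row ` I \<subseteq> V.span (matunit 0 ` J)" by blast
  with B(1) have "B \<subseteq> V.span (matunit 0 ` J)" by blast
  from V.independent_span_bound[OF _ B(2) this] J
  have Bfin: "finite B" and Bc: "card B \<le> card (matunit 0 ` J :: (nat \<Rightarrow> nat \<Rightarrow> 'k) set)" by auto
  have BcJ: "card B \<le> card J" using Bc card_image_le[OF J, of "matunit 0 :: nat \<Rightarrow> nat \<Rightarrow> nat \<Rightarrow> 'k"] by linarith
  obtain R where R: "R \<subseteq> I" "inj_on row R" "B = row ` R"
    using B(1) subset_image_inj by metis
  have cR: "card R = card B" using R card_image by metis
  have Rfin: "finite R" using R(1) I finite_subset by blast
  show ?thesis
  proof (intro exI[of _ R] conjI ballI)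
    show "R \<subseteq> I" by fact
    show "card R \<le> card J" using cR BcJ by simp
    fix s assume s: "s \<in> I"
    have "row s \<in> V.span (row ` R)" using B(3) R(3) s by blast
    then obtain u where u: "row s = (\<Sum>v\<in>row ` R. mscale (u v) v)"
      using V.span_finite[of "row ` R"] Rfin by auto
    also have "\<dots> = (\<Sum>r\<in>R. mscale (u (row r)) (row r))"
      by (rule sum.reindex[OF R(2), unfolded comp_def])
    finally have eq: "row s = (\<Sum>r\<in>R. mscale (u (row r)) (row r))" .
    show "\<exists>w. \<forall>j\<in>J. f s j = (\<Sum>r\<in>R. w r * f r j)"
    proof (intro exI[of _ "\<lambda>r. u (row r)"] ballI)
      fix j assume j: "j \<in> J"
      have "f s j = row s 0 j" using j by (simp add: row_def)
      also have "\<dots> = (\<Sum>r\<in>R. u (row r) * f r j)"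
        unfolding eq sum_app using j by (simp add: row_def)
      finally show "f s j = (\<Sum>r\<in>R. u (row r) * f r j)" .
    qed
  qed
qed

lemma bilin_identity:
  fixes x y :: "nat \<Rightarrow> nat \<Rightarrow> 'k::field"
  shows "(\<Sum>p<n. \<Sum>q<n. u p * comm_bracket n x y p q * v q) =
    (\<Sum>r<n. (\<Sum>p<n. u p * x p r) * (\<Sum>q<n. y r q * v q) - (\<Sum>p<n. u p * y p r) * (\<Sum>q<n. x r q * v q))"
proof -
  have "(\<Sum>p<n. \<Sum>q<n. u p * comm_bracket n x y p q * v q) =
    (\<Sum>p<n. \<Sum>q<n. \<Sum>r<n. u p * x p r * y r q * v q - u p * y p r * x r q * v q)"
    by (simp add: comm_bracket_def sum_distrib_left sum_distrib_right sum_subtractf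
        right_diff_distrib left_diff_distrib mult.assoc)
  also have "\<dots> = (\<Sum>p<n. \<Sum>r<n. \<Sum>q<n. u p * x p r * y r q * v q - u p * y p r * x r q * v q)"
    by (rule sum.cong[OF refl], rule sum.swap)
  also have "\<dots> = (\<Sum>r<n. \<Sum>p<n. \<Sum>q<n. u p * x p r * y r q * v q - u p * y p r * x r q * v q)"
    by (rule sum.swap)
  also have "\<dots> = (\<Sum>r<n. \<Sum>q<n. \<Sum>p<n. u p * x p r * y r q * v q - u p * y p r * x r q * v q)"
    by (rule sum.cong[OF refl], rule sum.swap)
  also have "\<dots> = (\<Sum>r<n. (\<Sum>p<n. u p * x p r) * (\<Sum>q<n. y r q * v q) - (\<Sum>p<n. u p * y p r) * (\<Sum>q<n. x r q * v q))"
    by (simp add: sum_distrib_left sum_distrib_right sum_subtractf mult.assoc)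
  finally show ?thesis .
qed

lemma delta_sum_l:
  fixes g w :: "nat \<Rightarrow> 'k::field"
  assumes "R \<subseteq> {..<n}" "s < n"
  shows "(\<Sum>p<n. ((if p = s then 1 else 0) - (if p \<in> R then w p else 0)) * g p) = g s - (\<Sum>p\<in>R. w p * g p)"
proof -
  have "(\<Sum>p<n. (if p \<in> R then w p else 0) * g p) = (\<Sum>p<n. if p \<in> R then w p * g p else 0)"
    by (rule sum.cong) auto
  also have "\<dots> = (\<Sum>p\<in>R. w p * g p)"
    using sum.inter_restrict[of "{..<n}" "\<lambda>p. w p * g p" R] assms by (simp add: Int_absorb1)
  moreover have "(\<Sum>p<n. (if p = s then 1 else 0) * g p) = (\<Sum>p<n. if p = s then g p else 0)"
    by (rule sum.cong) auto
  moreover have "(\<Sum>p<n. if p = s then g p else 0) = g s" using assms by simp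
  ultimately show ?thesis by (simp add: left_diff_distrib sum_subtractf)
qed

lemma delta_sum_r:
  fixes g w :: "nat \<Rightarrow> 'k::field"
  assumes "R \<subseteq> {..<n}" "s < n"
  shows "(\<Sum>p<n. g p * ((if p = s then 1 else 0) - (if p \<in> R then w p else 0))) = g s - (\<Sum>p\<in>R. w p * g p)"
  using delta_sum_l[OF assms, of w g] by (simp add: mult.commute)

lemma Lzero: "x \<in> lie_poset_alg r0 r1 r2 \<Longrightarrow> \<not> prec r0 r1 r2 p q \<Longrightarrow> x p q = 0"
  using L_char by blast

lemma key:
  fixes x y :: "nat \<Rightarrow> nat \<Rightarrow> 'k::field"
  assumes xL: "x \<in> lie_poset_alg r0 r1 r2" and yL: "y \<in> lie_poset_alg r0 r1 r2"
  and R: "R \<subseteq> {0..<r0}" and R': "R' \<subseteq> {r0+r1..<r0+r1+r2}"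
  and s: "s \<in> {0..<r0} - R" and t: "t \<in> {r0+r1..<r0+r1+r2} - R'"
  and wx: "\<forall>j\<in>{r0..<r0+r1}. x s j = (\<Sum>p\<in>R. w p * x p j)"
  and vx: "\<forall>j\<in>{r0..<r0+r1}. x j t = (\<Sum>q\<in>R'. v q * x j q)"
  and Z0: "\<forall>p q. (p \<in> R \<or> q \<in> R') \<longrightarrow> comm_bracket (r0+r1+r2) x y p q = 0"
  shows "comm_bracket (r0+r1+r2) x y s t = 0"
proof -
  define n where "n = r0+r1+r2"
  define u where "u p = (if p = s then 1 else 0) - (if p \<in> R then w p else (0::'k))" for p
  define vv where "vv q = (if q = t then 1 else 0) - (if q \<in> R' then v q else (0::'k))" for q
  have Rn: "R \<subseteq> {..<n}" and R'n: "R' \<subseteq> {..<n}" and sn: "s < n" and tn: "t < n"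
    using R R' s t by (auto simp: n_def)
  have "(\<Sum>p<n. \<Sum>q<n. u p * comm_bracket n x y p q * vv q) = 0"
    unfolding bilin_identity
  proof (rule sum.neutral, rule ballI)
    fix r assume r: "r \<in> {..<n}"
    have A: "(\<Sum>p<n. u p * x p r) = x s r - (\<Sum>p\<in>R. w p * x p r)"
      unfolding u_def by (rule delta_sum_l[OF Rn sn])
    have C: "(\<Sum>p<n. u p * y p r) = y s r - (\<Sum>p\<in>R. w p * y p r)"
      unfolding u_def by (rule delta_sum_l[OF Rn sn])
    have B: "(\<Sum>q<n. y r q * vv q) = y r t - (\<Sum>q\<in>R'. v q * y r q)"
      unfolding vv_def by (rule delta_sum_r[OF R'n tn])
    have D: "(\<Sum>q<n. x r q * vv q) = x r t - (\<Sum>q\<in>R'. v q * x r q)"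
      unfolding vv_def by (rule delta_sum_r[OF R'n tn])
    consider "r < r0" | "r0 \<le> r \<and> r < r0 + r1" | "r0 + r1 \<le> r" by linarith
    then show "(\<Sum>p<n. u p * x p r) * (\<Sum>q<n. y r q * vv q) - (\<Sum>p<n. u p * y p r) * (\<Sum>q<n. x r q * vv q) = 0"
    proof cases
      case 1
      then have "\<forall>p. x p r = 0" "\<forall>p. y p r = 0"
        using Lzero[OF xL] Lzero[OF yL] by (auto simp: prec_def bot_elts_def mid_elts_def top_elts_def)
      then show ?thesis by simp
    next
      case 2
      then have "(\<Sum>p<n. u p * x p r) = 0" "(\<Sum>q<n. x r q * vv q) = 0"
        using A D wx vx by auto
      then show ?thesis by simp
    next
      case 3
      then have "\<forall>q. x r q = 0" "\<forall>q. y r q = 0"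
        using Lzero[OF xL] Lzero[OF yL] by (auto simp: prec_def bot_elts_def mid_elts_def top_elts_def)
      then show ?thesis by simp
    qed
  qed
  moreover have "(\<Sum>p<n. \<Sum>q<n. u p * comm_bracket n x y p q * vv q) =
      (\<Sum>p<n. \<Sum>q<n. if p = s then (if q = t then comm_bracket n x y s t else 0) else 0)"
  proof (intro sum.cong refl)
    fix p q
    show "u p * comm_bracket n x y p q * vv q = (if p = s then (if q = t then comm_bracket n x y s t else 0) else 0)"
    proof (cases "p \<in> R \<or> q \<in> R'")
      case True
      then show ?thesis using Z0 s t by (auto simp: n_def)
    next
      case False
      then show ?thesis by (auto simp: u_def vv_def)
    qed
  qed
  moreover have "\<dots> = comm_bracket n x y s t"
  proof -
    have inner: "(\<Sum>q<n. if p = s then (if q = t then comm_bracket n x y s t else 0) else 0)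
       = (if p = s then comm_bracket n x y s t else 0)" for p
      using tn by (cases "p = s") auto
    show ?thesis unfolding inner using sn by simp
  qed
  ultimately show ?thesis by (simp add: n_def)
qed

lemma bracket_supp:
  fixes x y :: "nat \<Rightarrow> nat \<Rightarrow> 'k::field"
  assumes xL: "x \<in> lie_poset_alg r0 r1 r2" and yL: "y \<in> lie_poset_alg r0 r1 r2"
  and pq: "\<not> (p < r0 \<and> r0 + r1 \<le> q \<and> q < r0 + r1 + r2)"
  shows "comm_bracket n x y p q = 0"
proof -
  have h: "x p r * y r q = 0" "y p r * x r q = 0" for r
  proof -
    have "\<not> (prec r0 r1 r2 p r \<and> prec r0 r1 r2 r q)"
      using pq by (auto simp: prec_def bot_elts_def mid_elts_def top_elts_def)
    then show "x p r * y r q = 0" "y p r * x r q = 0"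
      using Lzero[OF xL] Lzero[OF yL] by auto
  qed
  have "(\<Sum>r<n. x p r * y r q) = 0" "(\<Sum>r<n. y p r * x r q) = 0" by (simp_all only: h sum.neutral_const)
  then show ?thesis by (simp add: comm_bracket_def)
qed

lemma br_add: "comm_bracket n x (y + z) = comm_bracket n x y + comm_bracket n x (z :: nat \<Rightarrow> nat \<Rightarrow> 'k::field)"
  by (simp add: comm_bracket_def fun_eq_iff sum.distrib algebra_simps)

lemma br_scale: "comm_bracket n x (mscale c y) = mscale c (comm_bracket n x (y :: nat \<Rightarrow> nat \<Rightarrow> 'k::field))"
  by (simp add: comm_bracket_def fun_eq_iff sum_distrib_left algebra_simps)

lemma br_zero: "comm_bracket n x 0 = (0 :: nat \<Rightarrow> nat \<Rightarrow> 'k::field)"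
  by (simp add: comm_bracket_def fun_eq_iff)

lemma L_subspace: "V.subspace (lie_poset_alg r0 r1 r2 :: (nat \<Rightarrow> nat \<Rightarrow> 'k::field) set)"
  unfolding lie_poset_alg_def by simp

lemma W_subspace:
  "V.subspace (comm_bracket n x ` (lie_poset_alg r0 r1 r2 :: (nat \<Rightarrow> nat \<Rightarrow> 'k::field) set))"
  unfolding V.subspace_def
proof (intro conjI ballI allI)
  show "0 \<in> comm_bracket n x ` lie_poset_alg r0 r1 r2"
    using V.subspace_0[OF L_subspace] br_zero by (metis image_eqI)
next
  fix a b assume "a \<in> comm_bracket n x ` (lie_poset_alg r0 r1 r2 :: (nat \<Rightarrow> nat \<Rightarrow> 'k::field) set)"
    "b \<in> comm_bracket n x ` (lie_poset_alg r0 r1 r2 :: (nat \<Rightarrow> nat \<Rightarrow> 'k::field) set)"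
  then obtain y z where "y \<in> lie_poset_alg r0 r1 r2" "z \<in> lie_poset_alg r0 r1 r2"
    "a = comm_bracket n x y" "b = comm_bracket n x z" by auto
  then show "a + b \<in> comm_bracket n x ` lie_poset_alg r0 r1 r2"
    using V.subspace_add[OF L_subspace] br_add by (metis image_eqI)
next
  fix c a assume "a \<in> comm_bracket n x ` (lie_poset_alg r0 r1 r2 :: (nat \<Rightarrow> nat \<Rightarrow> 'k::field) set)"
  then obtain y where "y \<in> lie_poset_alg r0 r1 r2" "a = comm_bracket n x y" by auto
  then show "mscale c a \<in> comm_bracket n x ` lie_poset_alg r0 r1 r2"
    using V.subspace_scale[OF L_subspace] br_scale by (metis image_eqI)
qed

lemma restrict_span:
  fixes C :: "(nat \<times> nat) set"
  assumes "finite C"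
  shows "(\<lambda>p q. if (p,q) \<in> C then Z p q else 0) \<in> V.span ((\<lambda>pq. matunit (fst pq) (snd pq)) ` C :: (nat \<Rightarrow> nat \<Rightarrow> 'k::field) set)"
proof -
  have "(\<lambda>p q. if (p,q) \<in> C then Z p q else 0) = (\<Sum>pq\<in>C. mscale (Z (fst pq) (snd pq)) (matunit (fst pq) (snd pq)) :: nat \<Rightarrow> nat \<Rightarrow> 'k)"
  proof (intro ext)
    fix p q
    have "(\<Sum>pq\<in>C. mscale (Z (fst pq) (snd pq)) (matunit (fst pq) (snd pq)) :: nat \<Rightarrow> nat \<Rightarrow> 'k) p q
      = (\<Sum>a\<in>C. if a = (p,q) then Z p q else 0)"
      unfolding sum_app by (rule sum.cong) (auto simp: matunit_app)
    also have "\<dots> = (if (p,q) \<in> C then Z p q else 0)" using assms by simp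
    finally show "(if (p,q) \<in> C then Z p q else 0) = (\<Sum>pq\<in>C. mscale (Z (fst pq) (snd pq)) (matunit (fst pq) (snd pq)) :: nat \<Rightarrow> nat \<Rightarrow> 'k) p q" by simp
  qed
  also have "\<dots> \<in> V.span ((\<lambda>pq. matunit (fst pq) (snd pq)) ` C)"
    by (intro V.span_sum V.span_scale V.span_base) auto
  finally show ?thesis .
qed

lemma card_arith:
  fixes r0 r1 r2 a b :: nat
  assumes "r1 \<le> r0" "r1 \<le> r2" "r0 - r1 \<le> a" "r2 - r1 \<le> b"
  shows "r0 * r2 - a * b \<le> r1 * (r0 + r2 - r1)"
proof -
  obtain c d where c: "r0 = r1 + c" and d: "r2 = r1 + d" using assms le_Suc_ex by blast
  have "c * d \<le> a * b" using assms c d by (intro mult_le_mono) auto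
  then show ?thesis using c d by (simp add: algebra_simps)
qed

lemma upper:
  fixes x :: "nat \<Rightarrow> nat \<Rightarrow> 'k::field"
  assumes r: "r1 \<le> r0" "r1 \<le> r2" and xL: "x \<in> lie_poset_alg r0 r1 r2"
  shows "ad_rank (r0+r1+r2) (lie_poset_alg r0 r1 r2) x \<le> r1 * (r0 + r2 - r1)"
proof -
  define n where "n = r0+r1+r2"
  define L where "L = (lie_poset_alg r0 r1 r2 :: (nat \<Rightarrow> nat \<Rightarrow> 'k) set)"
  define W where "W = comm_bracket n x ` L"
  obtain R where R: "R \<subseteq> {0..<r0}" "card R \<le> card {r0..<r0+r1}"
    and Rw0: "\<forall>s\<in>{0..<r0}. \<exists>w. \<forall>j\<in>{r0..<r0+r1}. x s j = (\<Sum>r\<in>R. w r * x r j)"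
    using rows_span[of "{0..<r0}" "{r0..<r0+r1}" x] by auto
  obtain w where Rw: "\<forall>s\<in>{0..<r0}. \<forall>j\<in>{r0..<r0+r1}. x s j = (\<Sum>r\<in>R. w s r * x r j)"
    using bchoice[OF Rw0] by blast
  obtain R' where R': "R' \<subseteq> {r0+r1..<r0+r1+r2}" "card R' \<le> card {r0..<r0+r1}"
    and Rv0: "\<forall>t\<in>{r0+r1..<r0+r1+r2}. \<exists>v. \<forall>j\<in>{r0..<r0+r1}. x j t = (\<Sum>r\<in>R'. v r * x j r)"
    using rows_span[of "{r0+r1..<r0+r1+r2}" "{r0..<r0+r1}" "\<lambda>t j. x j t"] by auto
  obtain v where Rv: "\<forall>t\<in>{r0+r1..<r0+r1+r2}. \<forall>j\<in>{r0..<r0+r1}. x j t = (\<Sum>r\<in>R'. v t r * x j r)"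
    using bchoice[OF Rv0] by blast
  define S where "S = {0..<r0} - R"
  define T where "T = {r0+r1..<r0+r1+r2} - R'"
  define C where "C = {0..<r0} \<times> {r0+r1..<r0+r1+r2} - S \<times> T"
  define \<pi> where "\<pi> Z = (\<lambda>p q. if (p,q) \<in> C then Z p q else (0::'k))" for Z :: "nat \<Rightarrow> nat \<Rightarrow> 'k"
  have Cfin: "finite C" unfolding C_def by auto
  have Wsub: "V.subspace W" unfolding W_def L_def by (rule W_subspace)
  have zero: "Z = 0" if Z: "Z \<in> W" "\<pi> Z = 0" for Z
  proof -
    obtain y where yL: "y \<in> L" and Zy: "Z = comm_bracket n x y" using Z(1) unfolding W_def by auto
    have ZC: "Z p q = 0" if "(p,q) \<in> C" for p q
      using fun_cong[OF fun_cong[OF Z(2), of p], of q] that by (simp add: \<pi>_def)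
    have sup: "Z p q = 0" if "\<not> (p < r0 \<and> r0 + r1 \<le> q \<and> q < r0 + r1 + r2)" for p q
      unfolding Zy using bracket_supp[OF xL yL[unfolded L_def] that] .
    show "Z = 0"
    proof (intro ext)
      fix p q
      show "Z p q = 0 p q"
      proof (cases "(p,q) \<in> S \<times> T")
        case False
        then show ?thesis using ZC sup by (cases "p < r0 \<and> r0 + r1 \<le> q \<and> q < r0 + r1 + r2") (auto simp: C_def)
      next
        case True
        have Z0: "\<forall>p q. (p \<in> R \<or> q \<in> R') \<longrightarrow> comm_bracket (r0+r1+r2) x y p q = 0"
        proof (intro allI impI)
          fix p q assume "p \<in> R \<or> q \<in> R'"
          then have "(p,q) \<notin> S \<times> T" by (auto simp: S_def T_def)
          then have "Z p q = 0" using ZC sup by (cases "p < r0 \<and> r0 + r1 \<le> q \<and> q < r0 + r1 + r2") (auto simp: C_def)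
          then show "comm_bracket (r0+r1+r2) x y p q = 0" using Zy by (simp add: n_def)
        qed
        have "comm_bracket (r0+r1+r2) x y p q = 0"
          apply (rule key[OF xL yL[unfolded L_def] R(1) R'(1), of p q "w p" "v q"])
          using True Rw Rv Z0 by (auto simp: S_def T_def)
        then show ?thesis using Zy by (simp add: n_def)
      qed
    qed
  qed
  have \<pi>diff: "\<pi> (a - b) = \<pi> a - \<pi> b" for a b by (simp add: \<pi>_def fun_eq_iff)
  have inj: "inj_on \<pi> W"
  proof (rule inj_onI)
    fix a b assume "a \<in> W" "b \<in> W" "\<pi> a = \<pi> b"
    then have "a - b = 0" using zero[of "a - b"] V.subspace_diff[OF Wsub] \<pi>diff by simp
    then show "a = b" by simp
  qed
  obtain B where B: "B \<subseteq> W" "V.independent B" "W \<subseteq> V.span B" "card B = V.dim W"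
    using V.basis_exists by metis
  have spB: "V.span B \<subseteq> W" using V.span_minimal[OF B(1) Wsub] .
  have lin: "module_hom mscale mscale \<pi>"
    unfolding module_hom_iff by (intro conjI V.module_axioms allI) (simp_all add: \<pi>_def fun_eq_iff)
  interpret P: module_hom mscale mscale \<pi> by (rule lin)
  have indep: "V.independent (\<pi> ` B)"
    using P.independent_injective_image[OF B(2)] inj_on_subset[OF inj spB] by blast
  have "\<pi> ` B \<subseteq> V.span ((\<lambda>pq. matunit (fst pq) (snd pq)) ` C)"
    using restrict_span[OF Cfin] by (auto simp: \<pi>_def)
  from V.independent_span_bound[OF _ indep this] Cfin
  have "card (\<pi> ` B) \<le> card ((\<lambda>pq. matunit (fst pq) (snd pq)) ` C :: (nat \<Rightarrow> nat \<Rightarrow> 'k) set)" by auto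
  also have "\<dots> \<le> card C" by (rule card_image_le[OF Cfin])
  also have "card (\<pi> ` B) = card B" using inj_on_subset[OF inj B(1)] by (rule card_image)
  finally have dimC: "V.dim W \<le> card C" using B(4) by simp
  have "card S = r0 - card R" unfolding S_def
    using R(1) by (subst card_Diff_subset) (auto intro: finite_subset)
  then have cS: "r0 - r1 \<le> card S" using R(2) by simp
  have "card T = r2 - card R'" unfolding T_def
    using R'(1) by (subst card_Diff_subset) (auto intro: finite_subset)
  then have cT: "r2 - r1 \<le> card T" using R'(2) by simp
  have "card C = r0 * r2 - card S * card T"
    unfolding C_def by (subst card_Diff_subset) (auto simp: S_def T_def card_cartesian_product)
  also have "\<dots> \<le> r1 * (r0 + r2 - r1)" by (rule card_arith[OF r cS cT])
  finally show ?thesis using dimC unfolding ad_rank_def W_def L_def n_def by simp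
qed

lemma sum_unit_r: "(\<Sum>r<(n::nat). f r * (if r = c \<and> P then 1 else 0)) = (if c < n \<and> P then f c else (0::'k::field))"
proof -
  have "(\<Sum>r<n. f r * (if r = c \<and> P then 1 else 0)) = (\<Sum>r<n. if r = c then (if P then f c else 0) else 0)"
    by (rule sum.cong) auto
  also have "\<dots> = (if c < n \<and> P then f c else 0)" by (cases P) simp_all
  finally show ?thesis by (simp add: conj_commute)
qed

lemma sum_unit_l: "(\<Sum>r<(n::nat). (if P \<and> r = c then 1 else 0) * g r) = (if P \<and> c < n then g c else (0::'k::field))"
proof -
  have "(\<Sum>r<n. (if P \<and> r = c then 1 else 0) * g r) = (\<Sum>r<n. if r = c then (if P then g c else 0) else 0)"
    by (rule sum.cong) auto
  also have "\<dots> = (if c < n \<and> P then g c else 0)" by (cases P) simp_all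
  finally show ?thesis by (simp add: conj_commute)
qed

lemma matunit_inj: "matunit p q = (matunit p' q' :: nat \<Rightarrow> nat \<Rightarrow> 'k::field) \<longleftrightarrow> p = p' \<and> q = q'"
proof
  assume "matunit p q = (matunit p' q' :: nat \<Rightarrow> nat \<Rightarrow> 'k::field)"
  then have "matunit p q p q = (matunit p' q' p q :: 'k)" by simp
  then show "p = p' \<and> q = q'" by (auto simp: matunit_app split: if_splits)
qed simp

lemma matunit_indep:
  fixes C :: "(nat \<times> nat) set"
  assumes "finite C"
  shows "V.independent ((\<lambda>pq. matunit (fst pq) (snd pq)) ` C :: (nat \<Rightarrow> nat \<Rightarrow> 'k::field) set)"
proof (rule V.independent_if_scalars_zero)
  show "finite ((\<lambda>pq. matunit (fst pq) (snd pq)) ` C :: (nat \<Rightarrow> nat \<Rightarrow> 'k::field) set)" using assms by simp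
next
  fix f :: "(nat \<Rightarrow> nat \<Rightarrow> 'k) \<Rightarrow> 'k" and e :: "nat \<Rightarrow> nat \<Rightarrow> 'k"
  assume S: "(\<Sum>x\<in>(\<lambda>pq. matunit (fst pq) (snd pq)) ` C. mscale (f x) x) = 0"
    and e: "e \<in> (\<lambda>pq. matunit (fst pq) (snd pq)) ` C"
  then obtain p q where eq: "e = matunit p q" by auto
  have "0 = (\<Sum>x\<in>((\<lambda>pq. matunit (fst pq) (snd pq)) ` C :: (nat \<Rightarrow> nat \<Rightarrow> 'k) set). mscale (f x) x) p q" using S by simp
  also have "\<dots> = (\<Sum>x\<in>((\<lambda>pq. matunit (fst pq) (snd pq)) ` C :: (nat \<Rightarrow> nat \<Rightarrow> 'k) set). if x = e then f e else 0)"
    unfolding sum_app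
  proof (rule sum.cong[OF refl])
    fix x assume "x \<in> ((\<lambda>pq. matunit (fst pq) (snd pq)) ` C :: (nat \<Rightarrow> nat \<Rightarrow> 'k) set)"
    then obtain a b where "x = matunit a b" by auto
    then show "mscale (f x) x p q = (if x = e then f e else 0)"
      by (auto simp: eq matunit_app matunit_inj)
  qed
  also have "\<dots> = f e" using e assms by simp
  finally show "f e = 0" by simp
qed

definition x0 :: "nat \<Rightarrow> nat \<Rightarrow> nat \<Rightarrow> nat \<Rightarrow> 'k::field" where
  "x0 r0 r1 p q = (if (p < r1 \<and> q = r0 + p) \<or> (r0 \<le> p \<and> p < r0 + r1 \<and> q = p + r1) then 1 else 0)"

lemma lower:
  assumes r: "r1 < r0" "r1 < r2"
  shows "x0 r0 r1 \<in> (lie_poset_alg r0 r1 r2 :: (nat \<Rightarrow> nat \<Rightarrow> 'k::field) set)"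
    and "r1 * (r0 + r2 - r1) \<le> ad_rank (r0+r1+r2) (lie_poset_alg r0 r1 r2 :: (nat \<Rightarrow> nat \<Rightarrow> 'k::field) set) (x0 r0 r1)"
proof -
  define n where "n = r0+r1+r2"
  define L where "L = (lie_poset_alg r0 r1 r2 :: (nat \<Rightarrow> nat \<Rightarrow> 'k) set)"
  define x where "x = (x0 r0 r1 :: nat \<Rightarrow> nat \<Rightarrow> 'k)"
  define W where "W = comm_bracket n x ` L"
  define C where "C = {0..<r0} \<times> {r0+r1..<r0+r1+r2} - {r1..<r0} \<times> {r0+r1+r1..<r0+r1+r2}"
  define E where "E = ((\<lambda>pq. matunit (fst pq) (snd pq)) ` C :: (nat \<Rightarrow> nat \<Rightarrow> 'k) set)"
  have xL: "x \<in> L" unfolding L_char L_def x_def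
    using r by (auto simp: x0_def prec_def bot_elts_def mid_elts_def top_elts_def)
  then show "x0 r0 r1 \<in> (lie_poset_alg r0 r1 r2 :: (nat \<Rightarrow> nat \<Rightarrow> 'k::field) set)"
    by (simp add: x_def L_def)
  have EW: "E \<subseteq> W"
  proof
    fix e assume "e \<in> E"
    then obtain p q where pq: "(p,q) \<in> C" and e: "e = matunit p q" unfolding E_def by auto
    show "e \<in> W"
    proof (cases "p < r1")
      case True
      define y where "y = (matunit (r0+p) q :: nat \<Rightarrow> nat \<Rightarrow> 'k)"
      have yL: "y \<in> L" unfolding L_char L_def y_def using pq True
        by (auto simp: matunit_app C_def prec_def bot_elts_def mid_elts_def top_elts_def)
      have "comm_bracket n x y = e"
      proof (intro ext)
        fix a b
        have "comm_bracket n x y a b = (if r0 + p < n \<and> b = q then x a (r0+p) else 0)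
             - (if a = r0 + p \<and> q < n then x q b else 0)"
          unfolding comm_bracket_def y_def matunit_app sum_unit_r sum_unit_l by simp
        also have "\<dots> = e a b" using pq True r
          by (auto simp: e matunit_app x_def x0_def n_def C_def)
        finally show "comm_bracket n x y a b = e a b" .
      qed
      then show ?thesis using yL unfolding W_def by blast
    next
      case False
      then obtain j where j: "q = r0 + r1 + j" "j < r1" using pq unfolding C_def
        by (intro that[of "q - (r0+r1)"]) auto
      define y where "y = (matunit p (r0+j) :: nat \<Rightarrow> nat \<Rightarrow> 'k)"
      have yL: "mscale (-1) y \<in> L" unfolding L_char L_def y_def using pq j
        by (auto simp: matunit_app C_def prec_def bot_elts_def mid_elts_def top_elts_def)
      have "comm_bracket n x y = mscale (-1) e"
      proof (intro ext)
        fix a b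
        have "comm_bracket n x y a b = (if p < n \<and> b = r0 + j then x a p else 0)
             - (if a = p \<and> r0 + j < n then x (r0+j) b else 0)"
          unfolding comm_bracket_def y_def matunit_app sum_unit_r sum_unit_l by simp
        also have "\<dots> = mscale (-1) e a b" using pq j r
          by (auto simp: e matunit_app x_def x0_def n_def C_def)
        finally show "comm_bracket n x y a b = mscale (-1) e a b" .
      qed
      then have "comm_bracket n x (mscale (-1) y) = e"
        unfolding br_scale by (simp add: fun_eq_iff)
      then show ?thesis using yL unfolding W_def by blast
    qed
  qed
  have Cfin: "finite C" unfolding C_def by auto
  have Eind: "V.independent E" unfolding E_def by (rule matunit_indep[OF Cfin])
  have cE: "card E = card C" unfolding E_def
    by (rule card_image) (auto simp: inj_on_def matunit_inj)
  define BT where "BT = {0..<r0} \<times> {r0+r1..<r0+r1+r2}"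
  have BTfin: "finite BT" unfolding BT_def by auto
  have Wsp: "W \<subseteq> V.span ((\<lambda>pq. matunit (fst pq) (snd pq)) ` BT :: (nat \<Rightarrow> nat \<Rightarrow> 'k) set)"
  proof
    fix Z assume "Z \<in> W"
    then obtain y where yL: "y \<in> L" and Zy: "Z = comm_bracket n x y" unfolding W_def by auto
    have "Z = (\<lambda>p q. if (p,q) \<in> BT then Z p q else 0)"
    proof (intro ext)
      fix p q show "Z p q = (if (p,q) \<in> BT then Z p q else 0)"
        using bracket_supp[OF xL[unfolded L_def] yL[unfolded L_def], of p q n] Zy
        by (auto simp: BT_def)
    qed
    also have "\<dots> \<in> V.span ((\<lambda>pq. matunit (fst pq) (snd pq)) ` BT)" by (rule restrict_span[OF BTfin])
    finally show "Z \<in> V.span ((\<lambda>pq. matunit (fst pq) (snd pq)) ` BT :: (nat \<Rightarrow> nat \<Rightarrow> 'k) set)" .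
  qed
  obtain B where B: "B \<subseteq> W" "V.independent B" "W \<subseteq> V.span B" "card B = V.dim W"
    using V.basis_exists by metis
  have Bfin: "finite B" using V.independent_span_bound[OF _ B(2)] B(1) Wsp BTfin by blast
  have "card E \<le> card B" using V.independent_span_bound[OF Bfin Eind] EW B(3) by blast
  moreover have "card C = r1 * (r0 + r2 - r1)"
  proof -
    have "card C = r0 * r2 - (r0 - r1) * (r2 - r1)"
      unfolding C_def by (subst card_Diff_subset) (auto simp: card_cartesian_product)
    also have "\<dots> = r1 * (r0 + r2 - r1)"
    proof -
      obtain c d where c: "r0 = r1 + c" and d: "r2 = r1 + d" using r less_imp_le le_Suc_ex by metis
      show ?thesis using c d by (simp add: algebra_simps)
    qed
    finally show ?thesis .
  qed
  ultimately show "r1 * (r0 + r2 - r1) \<le> ad_rank (r0+r1+r2) (lie_poset_alg r0 r1 r2 :: (nat \<Rightarrow> nat \<Rightarrow> 'k::field) set) (x0 r0 r1)"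
    using cE B(4) unfolding ad_rank_def W_def n_def L_def x_def by simp
qed

theorem theorem5:
  fixes r0 r1 r2 :: nat
  assumes "r0 \<ge> 1" "r1 \<ge> 1" "r2 \<ge> 1" "r1 < r0" "r1 < r2"
  shows "breadth (r0 + r1 + r2)
           (lie_poset_alg r0 r1 r2 :: (nat \<Rightarrow> nat \<Rightarrow> 'k::{alg_closed_field, field_char_0}) set)
         = r1 * (r0 + r2 - r1)"
proof -
  define L where "L = (lie_poset_alg r0 r1 r2 :: (nat \<Rightarrow> nat \<Rightarrow> 'k) set)"
  have up: "\<forall>y\<in>ad_rank (r0+r1+r2) L ` L. y \<le> r1 * (r0 + r2 - r1)"
    using upper[of r1 r0 r2] assms unfolding L_def by auto
  have x0L: "x0 r0 r1 \<in> L" using lower(1)[OF assms(4,5)] unfolding L_def .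
  have lo: "r1 * (r0 + r2 - r1) \<le> ad_rank (r0+r1+r2) L (x0 r0 r1)"
    using lower(2)[OF assms(4,5)] unfolding L_def .
  have mem: "r1 * (r0 + r2 - r1) \<in> ad_rank (r0+r1+r2) L ` L"
  proof -
    have "ad_rank (r0+r1+r2) L (x0 r0 r1) \<le> r1 * (r0 + r2 - r1)" using up x0L by blast
    then have "ad_rank (r0+r1+r2) L (x0 r0 r1) = r1 * (r0 + r2 - r1)" using lo by linarith
    then show ?thesis using x0L by (metis image_eqI)
  qed
  have "ad_rank (r0+r1+r2) L ` L \<subseteq> {..r1 * (r0 + r2 - r1)}"
    using up by blast
  then have fin: "finite (ad_rank (r0+r1+r2) L ` L)"
    using finite_subset by blast
  have "Max (ad_rank (r0+r1+r2) L ` L) = r1 * (r0 + r2 - r1)"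
  proof (rule Max_eqI[OF fin])
    show "\<And>y. y \<in> ad_rank (r0+r1+r2) L ` L \<Longrightarrow> y \<le> r1 * (r0 + r2 - r1)" using up by blast
    show "r1 * (r0 + r2 - r1) \<in> ad_rank (r0+r1+r2) L ` L" by (rule mem)
  qed
  then show ?thesis unfolding breadth_def L_def .
qed

end
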